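(* Let $\widehat{\mathcal M}=(E_{2n}\cup\{q\},\widehat{\mathcal C})$ be an oriented matroid. Suppose there exist two distinct circuits $X,Y\in\widehat{\mathcal C}$ whose supports are complementary, with $X_q=Y_q=+$, such that for every $i\in[n]$ either $X_{s_i}Y_{t_i}=X_{t_i}Y_{s_i}=0$, or ($X_{s_i}=Y_{t_i}$ and $X_{t_i}=Y_{s_i}$). Then $\widehat{\mathcal M}$ is not a P-matroid extension.
   Context: An oriented matroid $(E,\mathcal C)$ is given by its circuits, signed sets $X\in\{-,0,+\}^E$ satisfying: (C0) the zero vector is not a circuit; (C1) $X\in\mathcal C\iff -X\in\mathcal C$; (C2) if $\underline X\subseteq\underline Y$ then $X=\pm Y$; (C3) for $X\neq -Y$ and $e$ with $X_e=+$, $Y_e=-$, there is a circuit $Z$ with $Z^+\subseteq(X^+\cup Y^+)\setminus\{e\}$ and $Z^-\subseteq(X^-\cup Y^-)\setminus\{e\}$. Here $\underline X=\{e:X_e\neq0\}$, $X^\pm=\{e:X_e=\pm\}$. A basis is an inclusion-maximal subset of $E$ containing no circuit support. $S=\{s_1,\dots,s_n\}$, $T=\{t_1,\dots,t_n\}$, $E_{2n}=S\cup T$, $q\notin E_{2n}$; a set is complementary if it contains no pair $\{s_i,t_i\}$. A circuit $X$ is sign-reversing if $X_{s_i}=-X_{t_i}$ for every $i$ with $\{s_i,t_i\}\subseteq\underline X$. A P-matroid is an oriented matroid on $E_{2n}$ in which $S$ is a basis and no circuit is sign-reversing. A P-matroid extension is an oriented matroid on $E_{2n}\cup\{q\}$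 whose circuits $X$ with $X_q=0$, restricted to $E_{2n}$, are exactly the circuits of a P-matroid. (In a P-matroid extension every complementary set of size $n$ is a basis.) *)

theory Defs
  imports Main
begin

datatype sign = Neg | Zero | Pos

fun sign_opp :: "sign \<Rightarrow> sign" where
  "sign_opp Neg = Pos" | "sign_opp Zero = Zero" | "sign_opp Pos = Neg"

fun sign_mult :: "sign \<Rightarrow> sign \<Rightarrow> sign" where
  "sign_mult Zero _ = Zero"
| "sign_mult _ Zero = Zero"
| "sign_mult Pos Pos = Pos"
| "sign_mult Neg Neg = Pos"
| "sign_mult Pos Neg = Neg"
| "sign_mult Neg Pos = Neg"

type_synonym 'a signed = "'a \<Rightarrow> sign"

definition supp :: "'a signed \<Rightarrow> 'a set" where
  "supp X = {e. X e \<noteq> Zero}"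

definition posp :: "'a signed \<Rightarrow> 'a set" where
  "posp X = {e. X e = Pos}"

definition negp :: "'a signed \<Rightarrow> 'a set" where
  "negp X = {e. X e = Neg}"

definition sneg :: "'a signed \<Rightarrow> 'a signed" where
  "sneg X = (\<lambda>e. sign_opp (X e))"

definition oriented_matroid :: "'a set \<Rightarrow> 'a signed set \<Rightarrow> bool" where
  "oriented_matroid E \<C> \<longleftrightarrow>
     finite E \<and>
     (\<forall>X\<in>\<C>. supp X \<subseteq> E) \<and>
     (\<lambda>_. Zero) \<notin> \<C> \<and>
     (\<forall>X. X \<in> \<C> \<longleftrightarrow> sneg X \<in> \<C>) \<and>
     (\<forall>X\<in>\<C>. \<forall>Y\<in>\<C>. supp X \<subseteq> supp Y \<longrightarrow> X = Y \<or> X = sneg Y) \<and>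
     (\<forall>X\<in>\<C>. \<forall>Y\<in>\<C>. \<forall>e. X \<noteq> sneg Y \<and> X e = Pos \<and> Y e = Neg \<longrightarrow>
        (\<exists>Z\<in>\<C>. posp Z \<subseteq> (posp X \<union> posp Y) - {e} \<and>
                 negp Z \<subseteq> (negp X \<union> negp Y) - {e}))"

definition om_independent :: "'a set \<Rightarrow> 'a signed set \<Rightarrow> 'a set \<Rightarrow> bool" where
  "om_independent E \<C> B \<longleftrightarrow> B \<subseteq> E \<and> \<not> (\<exists>X\<in>\<C>. supp X \<subseteq> B)"

definition om_basis :: "'a set \<Rightarrow> 'a signed set \<Rightarrow> 'a set \<Rightarrow> bool" where
  "om_basis E \<C> B \<longleftrightarrow> om_independent E \<C> B \<and>
     (\<forall>B'. om_independent E \<C> B' \<and> B \<subseteq> B' \<longrightarrow> B' = B)"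

datatype elem = s nat | t nat | q

definition Sset :: "nat \<Rightarrow> elem set" where
  "Sset n = s ` {1..n}"

definition Tset :: "nat \<Rightarrow> elem set" where
  "Tset n = t ` {1..n}"

definition E2n :: "nat \<Rightarrow> elem set" where
  "E2n n = Sset n \<union> Tset n"

definition complementary :: "nat \<Rightarrow> elem set \<Rightarrow> bool" where
  "complementary n A \<longleftrightarrow> (\<forall>i\<in>{1..n}. \<not> (s i \<in> A \<and> t i \<in> A))"

definition sign_reversing :: "nat \<Rightarrow> elem signed \<Rightarrow> bool" where
  "sign_reversing n X \<longleftrightarrow>
     (\<forall>i\<in>{1..n}. s i \<in> supp X \<and> t i \<in> supp X \<longrightarrow> X (s i) = sign_opp (X (t i)))"

definition P_matroid :: "nat \<Rightarrow> elem signed set \<Rightarrow> bool" where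
  "P_matroid n \<C> \<longleftrightarrow>
     oriented_matroid (E2n n) \<C> \<and> om_basis (E2n n) \<C> (Sset n) \<and>
     (\<forall>X\<in>\<C>. \<not> sign_reversing n X)"

definition restrict_E2n :: "elem signed \<Rightarrow> elem signed" where
  "restrict_E2n X = X(q := Zero)"

definition P_matroid_extension :: "nat \<Rightarrow> elem signed set \<Rightarrow> bool" where
  "P_matroid_extension n \<C> \<longleftrightarrow>
     oriented_matroid (E2n n \<union> {q}) \<C> \<and>
     P_matroid n (restrict_E2n ` {X\<in>\<C>. X q = Zero})"

end

theory Submission
  imports Defs
begin

lemma sneg_sneg: "sneg (sneg Y) = Y"
proof -
  have "sign_opp (sign_opp a) = a" for a by (cases a) auto
  thus ?thesis unfolding sneg_def by simp
qed

lemma key: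
  fixes zs zt xs xt ys yt :: sign
  assumes "zs \<noteq> Zero" "zt \<noteq> Zero"
    "zs = Pos \<Longrightarrow> xs = Pos \<or> ys = Neg" "zt = Pos \<Longrightarrow> xt = Pos \<or> yt = Neg"
    "zs = Neg \<Longrightarrow> xs = Neg \<or> ys = Pos" "zt = Neg \<Longrightarrow> xt = Neg \<or> yt = Pos"
    "\<not> (xs \<noteq> Zero \<and> xt \<noteq> Zero)" "\<not> (ys \<noteq> Zero \<and> yt \<noteq> Zero)"
    "(sign_mult xs yt = Zero \<and> sign_mult xt ys = Zero) \<or> (xs = yt \<and> xt = ys)"
  shows "zs = sign_opp zt"
  using assms by (cases zs; cases zt; simp; cases xs; simp; cases xt; simp; cases ys; simp; cases yt; simp)

theorem mainTheorem10:
  fixes n :: nat and \<C> :: "elem signed set" and X Y :: "elem signed"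
  assumes om: "oriented_matroid (E2n n \<union> {q}) \<C>"
    and XC: "X \<in> \<C>" and YC: "Y \<in> \<C>" and XY: "X \<noteq> Y"
    and compX: "complementary n (supp X)" and compY: "complementary n (supp Y)"
    and Xq: "X q = Pos" and Yq: "Y q = Pos"
    and cond: "\<forall>i\<in>{1..n}.
       (sign_mult (X (s i)) (Y (t i)) = Zero \<and> sign_mult (X (t i)) (Y (s i)) = Zero)
       \<or> (X (s i) = Y (t i) \<and> X (t i) = Y (s i))"
  shows "\<not> P_matroid_extension n \<C>"
proof
  assume PE: "P_matroid_extension n \<C>"
  have "\<forall>X. X \<in> \<C> \<longleftrightarrow> sneg X \<in> \<C>" using om unfolding oriented_matroid_def by (elim conjE)
  hence nYC: "sneg Y \<in> \<C>" using YC by simp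
  have ne: "X \<noteq> sneg (sneg Y)" unfolding sneg_sneg by (rule XY)
  have nYq: "sneg Y q = Neg" using Yq by (simp add: sneg_def)
  have elim: "\<forall>X\<in>\<C>. \<forall>Y\<in>\<C>. \<forall>e. X \<noteq> sneg Y \<and> X e = Pos \<and> Y e = Neg \<longrightarrow>
        (\<exists>Z\<in>\<C>. posp Z \<subseteq> (posp X \<union> posp Y) - {e} \<and>
                 negp Z \<subseteq> (negp X \<union> negp Y) - {e})" using om unfolding oriented_matroid_def by (elim conjE)
  have "\<exists>Z\<in>\<C>. posp Z \<subseteq> (posp X \<union> posp (sneg Y)) - {q} \<and>
                 negp Z \<subseteq> (negp X \<union> negp (sneg Y)) - {q}"
    using elim[rule_format, OF XC nYC, of q] ne Xq nYq by simp
  then obtain Z where ZC: "Z \<in> \<C>"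
    and Zp: "posp Z \<subseteq> (posp X \<union> posp (sneg Y)) - {q}"
    and Zn: "negp Z \<subseteq> (negp X \<union> negp (sneg Y)) - {q}"
    by blast
  have Zq: "Z q = Zero"
  proof (cases "Z q")
    case Neg then have "q \<in> negp Z" by (simp add: negp_def)
    then show ?thesis using Zn by blast
  next
    case Pos then have "q \<in> posp Z" by (simp add: posp_def)
    then show ?thesis using Zp by blast
  qed simp
  have sp: "sneg Y e = Pos \<Longrightarrow> Y e = Neg" for e by (cases "Y e") (simp_all add: sneg_def)
  have sn: "sneg Y e = Neg \<Longrightarrow> Y e = Pos" for e by (cases "Y e") (simp_all add: sneg_def)
  have pos: "Z e = Pos \<Longrightarrow> X e = Pos \<or> Y e = Neg" for e
  proof -
    assume "Z e = Pos" then have "e \<in> posp Z" by (simp add: posp_def)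
    then have "e \<in> posp X \<or> e \<in> posp (sneg Y)" using Zp by blast
    then show ?thesis using sp by (auto simp: posp_def)
  qed
  have neg: "Z e = Neg \<Longrightarrow> X e = Neg \<or> Y e = Pos" for e
  proof -
    assume "Z e = Neg" then have "e \<in> negp Z" by (simp add: negp_def)
    then have "e \<in> negp X \<or> e \<in> negp (sneg Y)" using Zn by blast
    then show ?thesis using sn by (auto simp: negp_def)
  qed
  have "restrict_E2n Z = Z" using Zq unfolding restrict_E2n_def by auto
  hence "Z \<in> restrict_E2n ` {X\<in>\<C>. X q = Zero}" using ZC Zq by (metis (mono_tags, lifting) image_eqI mem_Collect_eq)
  moreover have "\<forall>X\<in>restrict_E2n ` {X\<in>\<C>. X q = Zero}. \<not> sign_reversing n X" using PE
    unfolding P_matroid_extension_def P_matroid_def by (elim conjE)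
  ultimately have nsr: "\<not> sign_reversing n Z" by blast
  have "sign_reversing n Z"
    unfolding sign_reversing_def
  proof (intro ballI impI)
    fix i assume i: "i \<in> {1..n}" and st: "s i \<in> supp Z \<and> t i \<in> supp Z"
    have cX: "\<not> (X (s i) \<noteq> Zero \<and> X (t i) \<noteq> Zero)"
      using compX i unfolding complementary_def supp_def by auto
    have cY: "\<not> (Y (s i) \<noteq> Zero \<and> Y (t i) \<noteq> Zero)"
      using compY i unfolding complementary_def supp_def by auto
    have ci: "(sign_mult (X (s i)) (Y (t i)) = Zero \<and> sign_mult (X (t i)) (Y (s i)) = Zero)
       \<or> (X (s i) = Y (t i) \<and> X (t i) = Y (s i))" using cond i by blast
    show "Z (s i) = sign_opp (Z (t i))"
    proof (rule key[where xs="X (s i)" and xt="X (t i)" and ys="Y (s i)" and yt="Y (t i)"])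
      show "Z (s i) \<noteq> Zero" "Z (t i) \<noteq> Zero" using st unfolding supp_def by auto
    qed (fact pos neg cX cY ci)+
  qed
  with nsr show False by simp
qed

end
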